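(* Let $\Omega$ be a finite set with $n=|\Omega|$, $V_\Omega=\mathbb{R}^\Omega$, and $V_\Upsilon,V_\Gamma\le V_\Omega$. Let $\mathcal{P}$, $\mathcal{Q}$, $\mathcal{R}$ be orthogonal decompositions of $V_\Omega$, $V_\Upsilon$, $V_\Gamma$, respectively, each containing $\mathbf{P}_0=\mathbf{Q}_0=\mathbf{R}_0=n^{-1}\mathbf{J}$, such that $\mathcal{Q}$ and $\mathcal{R}$ are both structure balanced in relation to $\mathcal{P}$. Suppose that either (A) $\mathbf{QPR}=\mathbf{0}$ for all $\mathbf{P}\in\mathcal{P}\setminus\{\mathbf{P}_0\}$, all $\mathbf{Q}\in\mathcal{Q}$ and all $\mathbf{R}\in\mathcal{R}$; or (B) for all $\mathbf{P}\in\mathcal{P}$, $\mathbf{Q}\in\mathcal{Q}$ and $\mathbf{R}\in\mathcal{R}$, if $\mathbf{PQ}$ and $\mathbf{PR}$ are both nonzero then $\mathbf{P}\vartriangleright\mathbf{Q}=\mathbf{P}$ or $\mathbf{P}\vartriangleright\mathbf{R}=\mathbf{P}$. Then the decomposition $\mathcal{P}\vartriangleright\mathcal{Q}$ is compatible with the decomposition $\mathcal{P}\vartriangleright\mathcal{R}$, i.e. $\mathbf{BC}=\mathbf{CB}$ for all $\mathbf{B}\in\mathcal{P}\vartriangleright\mathcal{Q}$ and $\mathbf{C}\in\mathcal{P}\vartriangleright\mathcal{R}$.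
   Context: $\mathbf{J}$ is the $n\times n$ all-ones matrix. $V_\Omega$ carries the standard inner product; all matrices are $\Omega\times\Omega$. An orthogonal decomposition of a subspace $W\le V_\Omega$ is a finite set of nonzero symmetric idempotent matrices that are mutually orthogonal and whose sum is the orthogonal projector onto $W$; zero matrices are discarded from listed decompositions. For projectors $\mathbf{A},\mathbf{B}$: $\mathbf{B}$ has first-order balance in relation to $\mathbf{A}$ if $\mathbf{BAB}=\lambda_{\mathbf{AB}}\mathbf{B}$ for a scalar $\lambda_{\mathbf{AB}}$; $\lambda_{\mathbf{AB}}=0$ iff $\mathbf{AB}=\mathbf{0}$; if $\lambda_{\mathbf{AB}}\ne0$, $\mathbf{A}\vartriangleright\mathbf{B}=\lambda_{\mathbf{AB}}^{-1}\mathbf{ABA}$. $\mathcal{B}$ is structure balanced in relation to $\mathcal{A}$ if every $\mathbf{B}\in\mathcal{B}$ has first-order balance in relation to every $\mathbf{A}\in\mathcal{A}$, and $\mathbf{B}_1\mathbf{A}\mathbf{B}_2=\mathbf{0}$ for all $\mathbf{A}\in\mathcal{A}$ and distinct $\mathbf{B}_1,\mathbf{B}_2\in\mathcal{B}$. Then $\mathbf{A}\vdash\mathcal{B}=\mathbf{A}-\sum'_{\mathbf{B}}\mathbf{A}\vartriangleright\mathbf{B}$ (sum over $\mathbf{B}$ with $\lambda_{\mathbf{AB}}\ne0$) and $\mathcal{A}\vartriangleright\mathcal{B}=\{\mathbf{A}\vartriangleright\mathbf{B}:\mathbf{A}\in\mathcal{A},\mathbf{B}\in\mathcal{B},\lambda_{\mathbf{AB}}\neq0\}\cup\{\mathbf{A}\vdash\mathcal{B}:\mathbf{A}\in\mathcal{A}\}$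 (zeros discarded). *)

theory Defs
  imports "HOL-Analysis.Analysis"
begin

text \<open>Omega is the finite index type 'n; matrices are real^'n^'n.\<close>

definition all_ones :: "real^'n^'n" where
  "all_ones = (\<chi> i j. 1)"

definition is_proj :: "real^'n^'n \<Rightarrow> bool" where
  "is_proj P \<longleftrightarrow> transpose P = P \<and> P ** P = P"

definition orth_projector_onto :: "(real^'n) set \<Rightarrow> real^'n^'n \<Rightarrow> bool" where
  "orth_projector_onto W P \<longleftrightarrow> is_proj P \<and> range (\<lambda>x. P *v x) = W"

definition orth_decomp :: "(real^'n) set \<Rightarrow> (real^'n^'n) set \<Rightarrow> bool" where
  "orth_decomp W D \<longleftrightarrow> finite D \<and> 0 \<notin> D \<and> (\<forall>A\<in>D. is_proj A)
     \<and> (\<forall>A\<in>D. \<forall>B\<in>D. A \<noteq> B \<longrightarrow> A ** B = 0)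
     \<and> orth_projector_onto W (\<Sum>A\<in>D. A)"

definition first_order_balance :: "real^'n^'n \<Rightarrow> real^'n^'n \<Rightarrow> bool" where
  "first_order_balance B A \<longleftrightarrow> (\<exists>l. B ** A ** B = l *\<^sub>R B)"

definition lam :: "real^'n^'n \<Rightarrow> real^'n^'n \<Rightarrow> real" where
  "lam A B = (SOME l. B ** A ** B = l *\<^sub>R B)"

definition tri :: "real^'n^'n \<Rightarrow> real^'n^'n \<Rightarrow> real^'n^'n" where
  "tri A B = inverse (lam A B) *\<^sub>R (A ** B ** A)"

definition structure_balanced :: "(real^'n^'n) set \<Rightarrow> (real^'n^'n) set \<Rightarrow> bool" where
  "structure_balanced Bs As \<longleftrightarrow>
     (\<forall>B\<in>Bs. \<forall>A\<in>As. first_order_balance B A)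
     \<and> (\<forall>A\<in>As. \<forall>B1\<in>Bs. \<forall>B2\<in>Bs. B1 \<noteq> B2 \<longrightarrow> B1 ** A ** B2 = 0)"

definition turnstile :: "real^'n^'n \<Rightarrow> (real^'n^'n) set \<Rightarrow> real^'n^'n" where
  "turnstile A Bs = A - (\<Sum>B\<in>{B\<in>Bs. lam A B \<noteq> 0}. tri A B)"

definition tri_set :: "(real^'n^'n) set \<Rightarrow> (real^'n^'n) set \<Rightarrow> (real^'n^'n) set" where
  "tri_set As Bs =
     ({tri A B | A B. A \<in> As \<and> B \<in> Bs \<and> lam A B \<noteq> 0}
      \<union> {turnstile A Bs | A. A \<in> As}) - {0}"

end

theory Submission
  imports Defs
begin

lemma mm_add_right: "((A::real^'n::finite^'m) + B) ** (C::real^'k::finite^'n) = A ** C + B ** C"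
  by (simp add: matrix_matrix_mult_def vec_eq_iff distrib_right sum.distrib)

lemma mm_scaleR_left: "(c *\<^sub>R A) ** (B::real^'n::finite^'m) = c *\<^sub>R (A ** B)"
  by (simp add: matrix_matrix_mult_def vec_eq_iff sum_distrib_left mult.assoc)

lemma mm_scaleR_right: "(A::real^'n::finite^'m) ** (c *\<^sub>R B) = c *\<^sub>R (A ** B)"
  by (simp add: matrix_matrix_mult_def vec_eq_iff sum_distrib_left mult.left_commute)

lemma mm_sum_left: "finite S \<Longrightarrow> (sum f S) ** (B::real^'n::finite^'m) = sum (\<lambda>x. f x ** B) S"
  by (induction S rule: finite_induct) (simp_all add: mm_add_right)

lemma mm_sum_right: "finite S \<Longrightarrow> (B::real^'n::finite^'m) ** (sum f S) = sum (\<lambda>x. B ** f x) S"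
  by (induction S rule: finite_induct) (simp_all add: matrix_add_ldistrib)

lemma JXJ: "all_ones ** X ** all_ones = (\<Sum>k\<in>UNIV. \<Sum>l\<in>UNIV. X$l$k) *\<^sub>R (all_ones::real^'n::finite^'n)"
  by (simp add: matrix_matrix_mult_def vec_eq_iff all_ones_def sum_distrib_right)

lemma comm_lin:
  fixes M P :: "real^'n::finite^'n"
  assumes "finite S" "M ** P = P ** M" "\<And>x. x\<in>S \<Longrightarrow> M ** f x = f x ** M"
  shows "M ** (a *\<^sub>R P + (\<Sum>x\<in>S. c x *\<^sub>R f x)) = (a *\<^sub>R P + (\<Sum>x\<in>S. c x *\<^sub>R f x)) ** M"
proof -
  have "M ** (a *\<^sub>R P + (\<Sum>x\<in>S. c x *\<^sub>R f x)) = a *\<^sub>R (M ** P) + (\<Sum>x\<in>S. c x *\<^sub>R (M ** f x))"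
    using assms(1) by (simp only: matrix_add_ldistrib mm_scaleR_right mm_sum_right)
  also have "\<dots> = a *\<^sub>R (P ** M) + (\<Sum>x\<in>S. c x *\<^sub>R (f x ** M))"
    using assms(2,3) by simp
  also have "\<dots> = (a *\<^sub>R P + (\<Sum>x\<in>S. c x *\<^sub>R f x)) ** M"
    using assms(1) by (simp only: mm_add_right mm_scaleR_left mm_sum_left)
  finally show ?thesis .
qed

definition lin :: "real^'n^'n \<Rightarrow> (real^'n^'n) set \<Rightarrow> real^'n^'n \<Rightarrow> bool" where
  "lin P D B \<longleftrightarrow> (\<exists>a S c. finite S \<and> S \<subseteq> D \<and> B = a *\<^sub>R P + (\<Sum>Q\<in>S. c Q *\<^sub>R (P ** Q ** P)))"

lemma lin_right:
  fixes P :: "real^'n::finite^'n"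
  assumes "P ** P = P" "lin P D B" shows "B ** P = B" "P ** B = B"
proof -
  obtain a S c where S: "finite S" "B = a *\<^sub>R P + (\<Sum>Q\<in>S. c Q *\<^sub>R (P ** Q ** P))"
    using assms(2) unfolding lin_def by blast
  have PPX: "P ** (P ** X) = P ** X" for X :: "real^'n^'n" by (simp only: matrix_mul_assoc assms(1))
  have e1: "P ** Q ** P ** P = P ** Q ** P" for Q
    by (simp only: matrix_mul_assoc[symmetric] assms(1))
  have e2: "P ** (P ** Q ** P) = P ** Q ** P" for Q
    by (simp only: matrix_mul_assoc[symmetric] PPX)
  show "B ** P = B" unfolding S(2) using S(1) assms(1)
    by (simp add: mm_add_right mm_scaleR_left mm_sum_left e1)
  show "P ** B = B" unfolding S(2) using S(1) assms(1)
    by (simp add: matrix_add_ldistrib mm_scaleR_right mm_sum_right e2)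
qed

lemma tri_lin:
  fixes PP QQ :: "(real^'n::finite^'n) set"
  assumes "finite QQ" "B \<in> tri_set PP QQ"
  shows "\<exists>P\<in>PP. lin P QQ B"
proof -
  from assms(2) consider (a) A Q where "A \<in> PP" "Q \<in> QQ" "B = tri A Q"
    | (b) A where "A \<in> PP" "B = turnstile A QQ"
    unfolding tri_set_def by blast
  then show ?thesis
  proof cases
    case a
    have "lin A QQ B" unfolding lin_def
      apply (rule exI[of _ 0], rule exI[of _ "{Q}"], rule exI[of _ "\<lambda>_. inverse (lam A Q)"])
      using a by (simp add: tri_def)
    then show ?thesis using a(1) by blast
  next
    case b
    have "lin A QQ B" unfolding lin_def
      apply (rule exI[of _ 1], rule exI[of _ "{Q\<in>QQ. lam A Q \<noteq> 0}"], rule exI[of _ "\<lambda>Q. - inverse (lam A Q)"])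
      using b assms(1) by (simp add: turnstile_def tri_def sum_negf)
    then show ?thesis using b(1) by blast
  qed
qed

lemma scaleJ_comm:
  "((x::real) *\<^sub>R (all_ones::real^'n::finite^'n)) ** (y *\<^sub>R all_ones) = (y *\<^sub>R all_ones) ** (x *\<^sub>R all_ones)"
  by (simp add: mm_scaleR_left mm_scaleR_right mult.commute)

lemma core:
  fixes P Q R :: "real^'n::finite^'n"
  assumes P: "is_proj P" and Q: "is_proj Q" and R: "is_proj R" and P0: "P \<noteq> 0"
    and H: "(P \<noteq> c *\<^sub>R all_ones \<longrightarrow> Q ** P ** R = 0)
      \<or> (P ** Q \<noteq> 0 \<and> P ** R \<noteq> 0 \<longrightarrow> tri P Q = P \<or> tri P R = P)"
  shows "(P ** Q ** P) ** (P ** R ** P) = (P ** R ** P) ** (P ** Q ** P)"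
proof -
  have t0: "transpose (0::real^'n^'n) = 0" by (simp add: transpose_def vec_eq_iff)
  have PP: "P ** P = P" and Pt: "transpose P = P" using P by (auto simp: is_proj_def)
  have PPX: "P ** (P ** X) = P ** X" for X :: "real^'n^'n" by (simp only: matrix_mul_assoc PP)
  have Qt: "transpose Q = Q" and Rt: "transpose R = R" using Q R by (auto simp: is_proj_def)
  have red1: "(P ** Q ** P) ** (P ** R ** P) = P ** (Q ** P ** R) ** P"
    by (simp only: matrix_mul_assoc[symmetric] PP PPX)
  have red2: "(P ** R ** P) ** (P ** Q ** P) = P ** (R ** P ** Q) ** P"
    by (simp only: matrix_mul_assoc[symmetric] PP PPX)
  have tr: "R ** P ** Q = transpose (Q ** P ** R)"
    by (simp add: matrix_transpose_mul Pt Qt Rt matrix_mul_assoc)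
  show ?thesis
  proof (cases "P ** Q = 0 \<or> P ** R = 0")
    case True
    have QP: "Q ** P = transpose (P ** Q)" and RP: "R ** P = transpose (P ** R)"
      by (simp_all add: matrix_transpose_mul Pt Qt Rt)
    from True show ?thesis
    proof
      assume z: "P ** Q = 0"
      hence "Q ** P = 0" using QP t0 by simp
      thus ?thesis using z by (simp add: matrix_mul_assoc)
    next
      assume z: "P ** R = 0"
      hence "R ** P = 0" using RP t0 by simp
      thus ?thesis using z by (simp add: matrix_mul_assoc)
    qed
  next
    case nz: False
    have trP: "P ** X ** P = lam P X *\<^sub>R P" if "tri P X = P" for X
    proof (cases "lam P X = 0")
      case True
      then show ?thesis using that P0 by (simp add: tri_def)
    next
      case False
      have "lam P X *\<^sub>R tri P X = P ** X ** P" using False by (simp add: tri_def)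
      then show ?thesis using that by simp
    qed
    have PJ: "(c *\<^sub>R all_ones) ** X ** (c *\<^sub>R all_ones) = (c * c * (\<Sum>k\<in>UNIV. \<Sum>l\<in>UNIV. X$l$k)) *\<^sub>R (all_ones::real^'n^'n)" for X
      by (simp add: mm_scaleR_left mm_scaleR_right JXJ)
    from H show ?thesis
    proof
      assume A: "P \<noteq> c *\<^sub>R all_ones \<longrightarrow> Q ** P ** R = 0"
      show ?thesis
      proof (cases "P = c *\<^sub>R all_ones")
        case True
        show ?thesis unfolding True PJ by (rule scaleJ_comm)
      next
        case False
        hence z: "Q ** P ** R = 0" using A by simp
        hence "R ** P ** Q = 0" using tr t0 by simp
        thus ?thesis using z red1 red2 by simp
      qed
    next
      assume B: "P ** Q \<noteq> 0 \<and> P ** R \<noteq> 0 \<longrightarrow> tri P Q = P \<or> tri P R = P"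
      hence "tri P Q = P \<or> tri P R = P" using nz by simp
      thus ?thesis
      proof
        assume "tri P Q = P"
        hence e: "P ** Q ** P = lam P Q *\<^sub>R P" by (rule trP)
        have "P ** (P ** R ** P) = P ** R ** P" "(P ** R ** P) ** P = P ** R ** P"
          by (simp_all only: matrix_mul_assoc[symmetric] PP PPX)
        thus ?thesis unfolding e by (simp add: mm_scaleR_left mm_scaleR_right)
      next
        assume "tri P R = P"
        hence e: "P ** R ** P = lam P R *\<^sub>R P" by (rule trP)
        have "P ** (P ** Q ** P) = P ** Q ** P" "(P ** Q ** P) ** P = P ** Q ** P"
          by (simp_all only: matrix_mul_assoc[symmetric] PP PPX)
        thus ?thesis unfolding e by (simp add: mm_scaleR_left mm_scaleR_right)
      qed
    qed
  qed
qed

theorem theorem3: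
  fixes PP QQ RR :: "(real^'n::finite^'n) set"
    and U G :: "(real^'n) set"
  assumes "subspace U" and "subspace G"
    and "orth_decomp UNIV PP" and "orth_decomp U QQ" and "orth_decomp G RR"
    and "(1 / real CARD('n)) *\<^sub>R all_ones \<in> PP"
    and "(1 / real CARD('n)) *\<^sub>R all_ones \<in> QQ"
    and "(1 / real CARD('n)) *\<^sub>R all_ones \<in> RR"
    and "structure_balanced QQ PP" and "structure_balanced RR PP"
    and "(\<forall>P\<in>PP - {(1 / real CARD('n)) *\<^sub>R all_ones}. \<forall>Q\<in>QQ. \<forall>R\<in>RR. Q ** P ** R = 0)
         \<or> (\<forall>P\<in>PP. \<forall>Q\<in>QQ. \<forall>R\<in>RR. P ** Q \<noteq> 0 \<and> P ** R \<noteq> 0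
               \<longrightarrow> tri P Q = P \<or> tri P R = P)"
  shows "\<forall>B\<in>tri_set PP QQ. \<forall>C\<in>tri_set PP RR. B ** C = C ** B"
proof -
  let ?P0 = "(1 / real CARD('n)) *\<^sub>R (all_ones::real^'n^'n)"
  have fPP: "finite PP" and z: "0 \<notin> PP" and pP: "\<And>A. A \<in> PP \<Longrightarrow> is_proj A"
    and oP: "\<And>A B. A \<in> PP \<Longrightarrow> B \<in> PP \<Longrightarrow> A \<noteq> B \<Longrightarrow> A ** B = 0"
    using assms(3) unfolding orth_decomp_def by blast+
  have fQQ: "finite QQ" and pQ: "\<And>A. A \<in> QQ \<Longrightarrow> is_proj A"
    using assms(4) unfolding orth_decomp_def by blast+
  have fRR: "finite RR" and pR: "\<And>A. A \<in> RR \<Longrightarrow> is_proj A"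
    using assms(5) unfolding orth_decomp_def by blast+
  have cor: "(P ** Q ** P) ** (P ** R ** P) = (P ** R ** P) ** (P ** Q ** P)"
    if "P \<in> PP" "Q \<in> QQ" "R \<in> RR" for P Q R
  proof (rule core[where c="1 / real CARD('n)"])
    show "is_proj P" "is_proj Q" "is_proj R" using that pP pQ pR by auto
    show "P \<noteq> 0" using that z by auto
    show "(P \<noteq> ?P0 \<longrightarrow> Q ** P ** R = 0) \<or> (P ** Q \<noteq> 0 \<and> P ** R \<noteq> 0 \<longrightarrow> tri P Q = P \<or> tri P R = P)"
    proof (rule disjE[OF assms(11)])
      assume A: "\<forall>P\<in>PP - {?P0}. \<forall>Q\<in>QQ. \<forall>R\<in>RR. Q ** P ** R = 0"
      have "P \<noteq> ?P0 \<longrightarrow> Q ** P ** R = 0"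
      proof
        assume "P \<noteq> ?P0"
        hence "P \<in> PP - {?P0}" using that by simp
        thus "Q ** P ** R = 0" using A that by simp
      qed
      thus ?thesis by (rule disjI1)
    next
      assume A: "\<forall>P\<in>PP. \<forall>Q\<in>QQ. \<forall>R\<in>RR. P ** Q \<noteq> 0 \<and> P ** R \<noteq> 0
               \<longrightarrow> tri P Q = P \<or> tri P R = P"
      show ?thesis using A that by (intro disjI2) simp
    qed
  qed
  show ?thesis
  proof (intro ballI)
    fix B C assume B: "B \<in> tri_set PP QQ" and C: "C \<in> tri_set PP RR"
    obtain P where P: "P \<in> PP" "lin P QQ B" using tri_lin[OF fQQ B] by blast
    obtain P' where P': "P' \<in> PP" "lin P' RR C" using tri_lin[OF fRR C] by blast
    have PP: "P ** P = P" using pP[OF P(1)] by (simp add: is_proj_def)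
    have PPX: "P ** (P ** X) = P ** X" for X :: "real^'n^'n" by (simp only: matrix_mul_assoc PP)
    have PP': "P' ** P' = P'" using pP[OF P'(1)] by (simp add: is_proj_def)
    show "B ** C = C ** B"
    proof (cases "P = P'")
      case False
      have "B ** C = (B ** P) ** (P' ** C)" using lin_right[OF PP P(2)] lin_right[OF PP' P'(2)] by simp
      also have "\<dots> = B ** (P ** P') ** C" by (simp add: matrix_mul_assoc)
      also have "\<dots> = 0" using oP[OF P(1) P'(1) False] by simp
      finally have 1: "B ** C = 0" .
      have "C ** B = (C ** P') ** (P ** B)" using lin_right[OF PP P(2)] lin_right[OF PP' P'(2)] by simp
      also have "\<dots> = C ** (P' ** P) ** B" by (simp add: matrix_mul_assoc)
      also have "\<dots> = 0" using oP[OF P'(1) P(1)] False by simp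
      finally show ?thesis using 1 by simp
    next
      case True
      have Rc: "B ** (P ** R ** P) = (P ** R ** P) ** B" if R: "R \<in> RR" for R
      proof -
        obtain a S c where S: "finite S" "S \<subseteq> QQ" "B = a *\<^sub>R P + (\<Sum>Q\<in>S. c Q *\<^sub>R (P ** Q ** P))"
          using P(2) unfolding lin_def by blast
        have "(P ** R ** P) ** P = P ** (P ** R ** P)" by (simp only: matrix_mul_assoc[symmetric] PP PPX)
        moreover have "(P ** R ** P) ** (P ** Q ** P) = (P ** Q ** P) ** (P ** R ** P)" if "Q \<in> S" for Q
          using cor[OF P(1) _ R] that S(2) by auto
        ultimately have "(P ** R ** P) ** B = B ** (P ** R ** P)"
          unfolding S(3) by (intro comm_lin[OF S(1)]) auto
        thus ?thesis by simp
      qed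
      obtain a S c where S: "finite S" "S \<subseteq> RR" "C = a *\<^sub>R P + (\<Sum>R\<in>S. c R *\<^sub>R (P ** R ** P))"
        using P'(2) True unfolding lin_def by blast
      have "B ** P = P ** B" using lin_right[OF PP P(2)] by simp
      thus ?thesis unfolding S(3) using S(2) Rc by (intro comm_lin[OF S(1)]) auto
    qed
  qed
qed

end
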